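(* Let $(s,\pi)$ be a plane permutation on $[n]$ with $s=(s_0s_1\cdots s_{n-1})$ and diagonal $D=s\circ\pi^{-1}$, let $h=(i,j,k,l)$ with $i\le j<k\le l$ and $\{i,j,k,l\}\subset[n-1]$, and let $(s^h,\pi^h)=\chi_h\circ(s,\pi)$. Then $\pi^h(s_r)=\pi(s_r)$ for every $r\in\{0,1,\ldots,n-1\}\setminus\{i-1,j,k-1,l\}$. Moreover, if $j+1<k$ then $$\pi^h(s_{i-1})=\pi(s_{k-1}),\quad \pi^h(s_j)=\pi(s_l),\quad \pi^h(s_{k-1})=\pi(s_{i-1}),\quad \pi^h(s_l)=\pi(s_j),$$ and if $j=k-1$ then $$\pi^h(s_{i-1})=\pi(s_j),\quad \pi^h(s_j)=\pi(s_l),\quad \pi^h(s_l)=\pi(s_{i-1}).$$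
   Context: Permutations of $[n]=\{1,\dots,n\}$ are multiplied as composition of maps, $(\sigma\tau)(x)=\sigma(\tau(x))$. A plane permutation on $[n]$ is a pair $(s,\pi)$ where $s=(s_0s_1\cdots s_{n-1})$ is an $n$-cycle on $[n]$, written with a fixed starting element $s_0$, and $\pi$ is an arbitrary permutation of $[n]$; its diagonal is $D=s\circ\pi^{-1}$. For $h=(i,j,k,l)$ with $i\le j<k\le l$ and $\{i,j,k,l\}\subset[n-1]$, let $s^h$ be the $n$-cycle $(s_0,\dots,s_{i-1},s_k,\dots,s_l,s_{j+1},\dots,s_{k-1},s_i,\dots,s_j,s_{l+1},\dots,s_{n-1})$ obtained by interchanging the blocks $s_i\cdots s_j$ and $s_k\cdots s_l$ (when $k=j+1$ the middle block is empty), and let $\pi^h=D^{-1}\circ s^h$, so that $(s^h,\pi^h)$ is a plane permutation with the same diagonal $D$. Write $(s^h,\pi^h)=\chi_h\circ(s,\pi)$. *)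

theory Defs
  imports "HOL-Combinatorics.Combinatorics"
begin

text \<open>An n-cycle s = (s_0 s_1 ... s_{n-1}) on [n] with fixed starting element is represented
  by the distinct list [s_0, ..., s_{n-1}] with set {1..n}; as a map it is
  cycle_of_list, sending s_r to s_{(r+1) mod n}.\<close>

definition block_interchange :: "'a list \<Rightarrow> nat \<Rightarrow> nat \<Rightarrow> nat \<Rightarrow> nat \<Rightarrow> 'a list" where
  "block_interchange s i j k l =
     take i s @ drop k (take (Suc l) s) @ drop (Suc j) (take k s)
       @ drop i (take (Suc j) s) @ drop (Suc l) s"

definition diagonal :: "nat list \<Rightarrow> (nat \<Rightarrow> nat) \<Rightarrow> nat \<Rightarrow> nat" where
  "diagonal s \<pi> = cycle_of_list s \<circ> inv \<pi>"

definition chi :: "nat \<times> nat \<times> nat \<times> nat \<Rightarrow> nat list \<times> (nat \<Rightarrow> nat) \<Rightarrow> nat list \<times> (nat \<Rightarrow> nat)" where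
  "chi h sp = (case h of (i, j, k, l) \<Rightarrow> case sp of (s, \<pi>) \<Rightarrow>
      (block_interchange s i j k l,
       inv (diagonal s \<pi>) \<circ> cycle_of_list (block_interchange s i j k l)))"

end

theory Submission
  imports Defs
begin

lemma cyc_nth:
  assumes "distinct xs" "p < length xs"
  shows "cycle_of_list xs (xs ! p) = xs ! (Suc p mod length xs)"
proof -
  have "map (cycle_of_list xs) xs = rotate1 xs"
    using cyclic_rotation[OF assms(1), of 1] by simp
  hence "cycle_of_list xs (xs ! p) = rotate1 xs ! p"
    by (metis assms(2) nth_map)
  thus ?thesis using assms(2) by (simp add: nth_rotate1)
qed

lemma bi_length:
  assumes "i \<le> j" "j < k" "k \<le> l" "l < length s"
  shows "length (block_interchange s i j k l) = length s"
  using assms by (simp add: block_interchange_def)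

definition ff :: "nat \<Rightarrow> nat \<Rightarrow> nat \<Rightarrow> nat \<Rightarrow> nat \<Rightarrow> nat" where
  "ff i j k l p = (if p < i then p else if p < i + (l - k + 1) then p - i + k
     else if p < i + (l - k + 1) + (k - j - 1) then p - (i + (l - k + 1)) + j + 1
     else if p \<le> l then p - (i + (l - k + 1) + (k - j - 1)) + i else p)"

lemma bi_nth:
  assumes "i \<le> j" "j < k" "k \<le> l" "l < length s" "p < length s"
  shows "block_interchange s i j k l ! p = s ! ff i j k l p"
proof -
  define A where "A = take i s"
  define B where "B = drop k (take (Suc l) s)"
  define C where "C = drop (Suc j) (take k s)"
  define E where "E = drop i (take (Suc j) s)"
  define F where "F = drop (Suc l) s"
  have lA: "length A = i" and lB: "length B = l - k + 1" and lC: "length C = k - j - 1"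
    and lE: "length E = j - i + 1"
    using assms by (auto simp: A_def B_def C_def E_def)
  have bi: "block_interchange s i j k l = A @ B @ C @ E @ F"
    by (simp add: block_interchange_def A_def B_def C_def E_def F_def)
  show ?thesis
  proof (cases "p < i")
    case True thus ?thesis unfolding bi using lA by (simp add: nth_append_left ff_def A_def)
  next
    case c1: False
    hence 1: "(A @ B @ C @ E @ F) ! p = (B @ C @ E @ F) ! (p - i)"
      using lA by (simp add: nth_append_right)
    show ?thesis
    proof (cases "p < i + (l - k + 1)")
      case True
      hence "(B @ C @ E @ F) ! (p - i) = B ! (p - i)" using lB c1 by (simp add: nth_append_left)
      also have "\<dots> = s ! (k + (p - i))" unfolding B_def using True c1 assms by simp
      moreover have "ff i j k l p = k + (p - i)" using True c1 unfolding ff_def by simp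
      ultimately show ?thesis unfolding bi 1 by simp
    next
      case c2: False
      hence 2: "(B @ C @ E @ F) ! (p - i) = (C @ E @ F) ! (p - i - (l - k + 1))"
        using lB c1 by (simp add: nth_append_right)
      show ?thesis
      proof (cases "p < i + (l - k + 1) + (k - j - 1)")
        case True
        hence "(C @ E @ F) ! (p - i - (l - k + 1)) = C ! (p - i - (l - k + 1))"
          using lC c2 by (simp add: nth_append_left)
        also have "\<dots> = s ! (Suc j + (p - i - (l - k + 1)))" unfolding C_def using True c1 c2 assms by simp
        moreover have "ff i j k l p = Suc j + (p - i - (l - k + 1))" using True c1 c2 unfolding ff_def by (simp (no_asm_simp)) linarith
        ultimately show ?thesis unfolding bi 1 2 by simp
      next
        case c3: False
        hence 3: "(C @ E @ F) ! (p - i - (l - k + 1)) = (E @ F) ! (p - i - (l - k + 1) - (k - j - 1))"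
          using lC c2 by (simp add: nth_append_right)
        show ?thesis
        proof (cases "p \<le> l")
          case True
          hence "(E @ F) ! (p - i - (l - k + 1) - (k - j - 1)) = E ! (p - i - (l - k + 1) - (k - j - 1))"
            using lE c3 assms by (simp add: nth_append_left)
          also have "\<dots> = s ! (i + (p - i - (l - k + 1) - (k - j - 1)))" unfolding E_def using True c1 c2 c3 assms by simp
          moreover have "ff i j k l p = i + (p - i - (l - k + 1) - (k - j - 1))" using True c1 c2 c3 unfolding ff_def by (simp (no_asm_simp))
          ultimately show ?thesis unfolding bi 1 2 3 by simp
        next
          case c4: False
          hence "(E @ F) ! (p - i - (l - k + 1) - (k - j - 1)) = F ! (p - i - (l - k + 1) - (k - j - 1) - (j - i + 1))"
            using lE c3 assms by (simp add: nth_append_right)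
          also have "\<dots> = s ! p" unfolding F_def using c4 c1 c2 c3 assms by simp
          moreover have "ff i j k l p = p" using c4 c1 c2 c3 unfolding ff_def by simp
          ultimately show ?thesis unfolding bi 1 2 3 by simp
        qed
      qed
    qed
  qed
qed

definition gg :: "nat \<Rightarrow> nat \<Rightarrow> nat \<Rightarrow> nat \<Rightarrow> nat \<Rightarrow> nat" where
  "gg i j k l r = (if r < i then r else if r \<le> j then r - i + (i + (l - k + 1) + (k - j - 1))
     else if r < k then r - (j + 1) + (i + (l - k + 1))
     else if r \<le> l then r - k + i else r)"

definition TT :: "nat \<Rightarrow> nat \<Rightarrow> nat \<Rightarrow> nat \<Rightarrow> nat \<Rightarrow> nat \<Rightarrow> nat" where
  "TT n i j k l r = (let m = ff i j k l (if Suc (gg i j k l r) = n then 0 else Suc (gg i j k l r))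
      in if m = 0 then n - 1 else m - 1)"

lemma ff1: "p < i \<Longrightarrow> ff i j k l p = p" by (simp add: ff_def)
lemma ff2: "i \<le> p \<Longrightarrow> p < i + (l - k + 1) \<Longrightarrow> ff i j k l p = p - i + k" by (simp add: ff_def)
lemma ff3: "i \<le> j \<Longrightarrow> j < k \<Longrightarrow> k \<le> l \<Longrightarrow> i + (l - k + 1) \<le> p \<Longrightarrow> p < i + (l - k + 1) + (k - j - 1) \<Longrightarrow> ff i j k l p = p - (i + (l - k + 1)) + j + 1"
  unfolding ff_def by (simp (no_asm_simp) ; arith)
lemma ff4: "i \<le> j \<Longrightarrow> j < k \<Longrightarrow> k \<le> l \<Longrightarrow> i + (l - k + 1) + (k - j - 1) \<le> p \<Longrightarrow> p \<le> l \<Longrightarrow> ff i j k l p = p - (i + (l - k + 1) + (k - j - 1)) + i"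
  unfolding ff_def by (simp (no_asm_simp) ; arith)
lemma ff5: "l < p \<Longrightarrow> i \<le> j \<Longrightarrow> j < k \<Longrightarrow> k \<le> l \<Longrightarrow> ff i j k l p = p"
  unfolding ff_def by (simp (no_asm_simp) ; arith)

lemma ff_lt: "i \<le> j \<Longrightarrow> j < k \<Longrightarrow> k \<le> l \<Longrightarrow> l < n \<Longrightarrow> p < n \<Longrightarrow> ff i j k l p < n"
  unfolding ff_def by (simp (no_asm_simp) ; arith)

lemma take_split: "a \<le> b \<Longrightarrow> take a xs @ drop a (take b xs) = take b xs"
  by (metis append_take_drop_id min.absorb1 take_take)

lemma bi_mset:
  assumes "i \<le> j" "j < k" "k \<le> l"
  shows "mset (block_interchange s i j k l) = mset s"
proof -
  have "s = take i s @ drop i (take (Suc j) s) @ drop (Suc j) (take k s) @ drop k (take (Suc l) s) @ drop (Suc l) s"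
    using assms by (simp add: take_split flip: append_assoc)
  hence "mset s = mset (take i s @ drop i (take (Suc j) s) @ drop (Suc j) (take k s) @ drop k (take (Suc l) s) @ drop (Suc l) s)"
    by simp
  thus ?thesis by (simp add: block_interchange_def ac_simps)
qed

lemma step:
  fixes n i j k l :: nat and s sh :: "nat list" and \<pi> \<pi>h :: "nat \<Rightarrow> nat"
  assumes "distinct s" and "set s = {1..n}" and "length s = n"
    and "\<pi> permutes {1..n}"
    and "1 \<le> i" and "i \<le> j" and "j < k" and "k \<le> l" and "l \<le> n - 1"
    and "(sh, \<pi>h) = chi (i, j, k, l) (s, \<pi>)"
    and p: "p < n" and r: "ff i j k l p = r"
    and t: "(let m = ff i j k l (if Suc p = n then 0 else Suc p) in if m = 0 then n - 1 else m - 1) = t"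
  shows "\<pi>h (s ! r) = \<pi> (s ! t)"
proof -
  have ln: "l < n" using assms by linarith
  define cs where "cs = cycle_of_list s"
  have sh: "sh = block_interchange s i j k l" and ph: "\<pi>h = inv (cs \<circ> inv \<pi>) \<circ> cycle_of_list sh"
    using assms(10) by (auto simp: chi_def diagonal_def cs_def)
  have lsh: "length sh = n" using bi_length[of i j k l s] assms ln sh by simp
  have dsh: "distinct sh" using bi_mset[of i j k l s] assms sh
    by (metis mset_eq_imp_distinct_iff)
  have bcs: "bij cs" unfolding cs_def using cycle_permutes permutes_bij by blast
  have bp: "bij \<pi>" using assms(4) permutes_bij by blast
  have binv: "bij (inv \<pi>)" using bp bij_imp_bij_inv by blast
  have invD: "inv (cs \<circ> inv \<pi>) = \<pi> \<circ> inv cs"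
    using o_inv_distrib[OF bcs binv] inv_inv_eq[OF bp] by simp
  have sr: "s ! r = sh ! p" using bi_nth[of i j k l s p] assms ln p r sh by simp
  define q where "q = (if Suc p = n then 0 else Suc p)"
  have q: "Suc p mod n = q" unfolding q_def using p by auto
  have qn: "q < n" unfolding q_def using p by auto
  have "cycle_of_list sh (sh ! p) = sh ! q" using cyc_nth[OF dsh, of p] lsh p q by simp
  also have "\<dots> = s ! ff i j k l q" using bi_nth[of i j k l s q] assms ln qn sh by simp
  finally have c1: "cycle_of_list sh (sh ! p) = s ! ff i j k l q" .
  define m where "m = ff i j k l q"
  have mn: "m < n" unfolding m_def using ff_lt[of i j k l n q] assms ln qn by simp
  have tt: "t = (if m = 0 then n - 1 else m - 1)" using t unfolding m_def q_def Let_def by simp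
  have tn: "t < n" using tt mn by auto
  have "Suc t mod n = m" using tt mn by auto
  hence "cs (s ! t) = s ! m" unfolding cs_def using cyc_nth[OF assms(1), of t] tn assms(3) by simp
  hence "inv cs (s ! m) = s ! t" using bcs by (metis bij_is_inj inv_f_f)
  thus ?thesis unfolding ph invD sr using c1 m_def by simp
qed

theorem lemma1:
  fixes n i j k l :: nat and s sh :: "nat list" and \<pi> \<pi>h :: "nat \<Rightarrow> nat"
  assumes "distinct s" and "set s = {1..n}" and "length s = n"
    and "\<pi> permutes {1..n}"
    and "1 \<le> i" and "i \<le> j" and "j < k" and "k \<le> l" and "l \<le> n - 1"
    and "(sh, \<pi>h) = chi (i, j, k, l) (s, \<pi>)"
  shows "(\<forall>r. r < n \<and> r \<notin> {i - 1, j, k - 1, l} \<longrightarrow> \<pi>h (s ! r) = \<pi> (s ! r))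
    \<and> (j + 1 < k \<longrightarrow>
         \<pi>h (s ! (i - 1)) = \<pi> (s ! (k - 1)) \<and> \<pi>h (s ! j) = \<pi> (s ! l)
       \<and> \<pi>h (s ! (k - 1)) = \<pi> (s ! (i - 1)) \<and> \<pi>h (s ! l) = \<pi> (s ! j))
    \<and> (j = k - 1 \<longrightarrow>
         \<pi>h (s ! (i - 1)) = \<pi> (s ! j) \<and> \<pi>h (s ! j) = \<pi> (s ! l)
       \<and> \<pi>h (s ! l) = \<pi> (s ! (i - 1)))"
proof -
  note st = step[OF assms]
  have ln: "l < n" using assms by linarith
  have ij: "i \<le> j" "j < k" "k \<le> l" "1 \<le> i" using assms by auto
  have A: "\<pi>h (s ! r) = \<pi> (s ! r)" if r: "r < n" "r \<notin> {i - 1, j, k - 1, l}" for r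
  proof -
    consider "r < i - 1" | "i \<le> r" "r < j" | "j < r" "r < k - 1" | "k \<le> r" "r < l"
      | "l < r" "Suc r < n" | "l < r" "Suc r = n" using r ij by fastforce
    thus ?thesis
    proof cases
      case 1
      show ?thesis by (rule st[of r]) (use 1 ij ln r in \<open>simp_all add: ff1 Let_def\<close>)
    next
      case 2
      show ?thesis by (rule st[of "r - i + (i + (l - k + 1) + (k - j - 1))"]) (use 2 ij ln r in \<open>simp_all add: ff4 Let_def\<close>)
    next
      case 3
      show ?thesis by (rule st[of "r - (j + 1) + (i + (l - k + 1))"]) (use 3 ij ln r in \<open>simp_all add: ff3 Let_def\<close>)
    next
      case 4
      show ?thesis by (rule st[of "r - k + i"]) (use 4 ij ln r in \<open>simp_all add: ff2 Let_def\<close>)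
    next
      case 5
      show ?thesis by (rule st[of r]) (use 5 ij ln r in \<open>simp_all add: ff5 Let_def\<close>)
    next
      case 6
      show ?thesis by (rule st[of r]) (use 6 ij ln r in \<open>simp_all add: ff5 ff1 Let_def\<close>)
    qed
  qed
  have B1: "\<pi>h (s ! (i - 1)) = \<pi> (s ! (k - 1))"
    by (rule st[of "i - 1"]) (use ij ln in \<open>simp_all add: ff1 ff2 Let_def\<close>)
  have B2: "\<pi>h (s ! j) = \<pi> (s ! l)"
  proof (cases "Suc l = n")
    case True
    show ?thesis by (rule st[of l]) (use True ij ln in \<open>simp_all add: ff1 ff4 Let_def\<close>)
  next
    case False
    show ?thesis by (rule st[of l]) (use False ij ln in \<open>simp_all add: ff5 ff4 Let_def\<close>)
  qed
  have B3: "\<pi>h (s ! (k - 1)) = \<pi> (s ! (i - 1))" if "j + 1 < k"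
    by (rule st[of "i + (l - k + 1) + (k - j - 1) - 1"]) (use that ij ln in \<open>simp_all add: ff3 ff4 Let_def\<close>)
  have B4: "\<pi>h (s ! l) = \<pi> (s ! j)" if "j + 1 < k"
    by (rule st[of "i + (l - k + 1) - 1"]) (use that ij ln in \<open>simp_all add: ff2 ff3 Let_def\<close>)
  have B5: "\<pi>h (s ! l) = \<pi> (s ! (i - 1))" if "j = k - 1"
    by (rule st[of "i + (l - k + 1) - 1"]) (use that ij ln in \<open>simp_all add: ff2 ff4 Let_def\<close>)
  have B6: "\<pi>h (s ! (i - 1)) = \<pi> (s ! j)" if "j = k - 1"
    using B1 that by simp
  show ?thesis using A B1 B2 B3 B4 B5 B6 by blast
qed

end
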